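(* Let $T\in(0,\infty)$, $(\Omega,\mathcal{F},\mathbb{P},(\mathcal{F}_t)_{t\in[0,T]})$ a stochastic basis, $W\colon[0,T]\times\Omega\to\mathbb{R}$ a standard $(\mathcal{F}_t)$-Brownian motion with continuous sample paths, $X\colon[0,T]\times\Omega\to\mathbb{R}$ an adapted process with continuous sample paths satisfying $X_t=X_0-\int_0^t(X_s)^3ds+W_t$ $\mathbb{P}$-a.s. for all $t\in[0,T]$, and let $\varepsilon\in(0,\frac12]$ satisfy $\mathbb{E}[\exp(\varepsilon|X_0|^4)]<\infty$. Let $D_t\in\mathcal{B}(\mathbb{R})$, $t\in(0,T]$, be a non-increasing family of sets with $\lambda_{\mathbb{R}}(D_T)\cdot\mathbb{P}[X_0\in D_T]>0$ and $\bigcup_{t\in(0,T]}\mathring{D}_t=\mathbb{R}$, and let $Y^N\colon[0,T]\times\Omega\to\mathbb{R}$, $N\in\mathbb{N}$, satisfy $Y^N_0=X_0$ and $$Y^N_t=Y^N_{nT/N}+\mathbb{1}_{D_{T/N}}(Y^N_{nT/N})\Big(W_t-W_{nT/N}-(Y^N_{nT/N})^3(t-\tfrac{nT}N)\Big)$$ for all $t\in[\frac{nT}N,\frac{(n+1)T}N]$, $n\in\{0,\dots,N-1\}$, $N\in\mathbb{N}$. Then for all $t\in(0,T]$, $N\in\mathbb{N}$, $p\in(0,\infty)$ and $q\in(2,\infty)$: $\lim_{M\to\infty}\mathbb{P}[\sup_{s\in[0,T]}|X_s-Y^M_s|>p]=0$ and $\mathbb{E}[\exp(p|Y^N_t|^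q)]=\infty$.
   Context: $\lambda_{\mathbb{R}}$ is Lebesgue measure; non-increasing family: $D_{t_2}\subseteq D_{t_1}$ for $t_1\le t_2$; $\mathring{D}_t$ is the interior of $D_t$. *)

theory Defs
  imports "HOL-Probability.Probability"
begin

definition stochastic_basis :: "'a measure \<Rightarrow> (real \<Rightarrow> 'a measure) \<Rightarrow> real \<Rightarrow> bool" where
  "stochastic_basis P F T \<longleftrightarrow>
     prob_space P \<and>
     (\<forall>t\<in>{0..T}. subalgebra P (F t)) \<and>
     (\<forall>s t. 0 \<le> s \<and> s \<le> t \<and> t \<le> T \<longrightarrow> sets (F s) \<subseteq> sets (F t)) \<and>
     (\<forall>N\<in>null_sets P. \<forall>A. A \<subseteq> N \<longrightarrow> A \<in> sets (F 0)) \<and>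
     (\<forall>t\<in>{0..<T}. sets (F t) = (\<Inter>s\<in>{t<..T}. sets (F s)))"

definition std_brownian_motion ::
  "'a measure \<Rightarrow> (real \<Rightarrow> 'a measure) \<Rightarrow> real \<Rightarrow> (real \<Rightarrow> 'a \<Rightarrow> real) \<Rightarrow> bool" where
  "std_brownian_motion P F T W \<longleftrightarrow>
     (\<forall>t\<in>{0..T}. W t \<in> borel_measurable (F t)) \<and>
     (\<forall>\<omega>\<in>space P. continuous_on {0..T} (\<lambda>t. W t \<omega>)) \<and>
     (AE \<omega> in P. W 0 \<omega> = 0) \<and>
     (\<forall>s t. 0 \<le> s \<and> s < t \<and> t \<le> T \<longrightarrow>
        distributed P lborel (\<lambda>\<omega>. W t \<omega> - W s \<omega>) (normal_density 0 (sqrt (t - s))) \<and>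
        (\<forall>A\<in>sets (F s). \<forall>B\<in>sets borel.
           measure P (A \<inter> {\<omega>\<in>space P. W t \<omega> - W s \<omega> \<in> B})
             = measure P A * measure P {\<omega>\<in>space P. W t \<omega> - W s \<omega> \<in> B}))"

end

theory Submission
  imports Defs
begin


lemma cover_small:
  fixes D :: "real \<Rightarrow> real set" and T R :: real
  assumes T: "0 < T"
    and Dm: "\<And>t1 t2. 0 < t1 \<Longrightarrow> t1 \<le> t2 \<Longrightarrow> t2 \<le> T \<Longrightarrow> D t2 \<subseteq> D t1"
    and Dc: "(\<Union>t\<in>{0<..T}. interior (D t)) = UNIV"
  obtains t0 where "0 < t0" "t0 \<le> T" "\<And>h. 0 < h \<Longrightarrow> h \<le> t0 \<Longrightarrow> cball 0 R \<subseteq> D h"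
proof -
  have cov: "cball (0::real) R \<subseteq> (\<Union>t\<in>{0<..T}. interior (D t))" using Dc by auto
  obtain I where I: "I \<subseteq> {0<..T}" "finite I" "cball 0 R \<subseteq> (\<Union>t\<in>I. interior (D t))"
    using compactE_image[OF compact_cball open_interior cov] by blast
  show ?thesis
  proof (cases "I = {}")
    case True
    then have "cball (0::real) R = {}" using I by auto
    then show ?thesis using that[of T] T by auto
  next
    case False
    define t0 where "t0 = Min I"
    have t0I: "t0 \<in> I" using False I unfolding t0_def by auto
    have "0 < t0" "t0 \<le> T" using t0I I by auto
    moreover have "cball 0 R \<subseteq> D h" if "0 < h" "h \<le> t0" for h
    proof
      fix z assume "z \<in> cball (0::real) R"
      then obtain t where t: "t \<in> I" "z \<in> interior (D t)" using I by auto
      have "t0 \<le> t" using t I unfolding t0_def by auto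
      have "t \<le> T" using t I by auto
      then have "D t \<subseteq> D h" using Dm[of h t] that \<open>t0 \<le> t\<close> by auto
      then show "z \<in> D h" using t interior_subset by blast
    qed
    ultimately show ?thesis using that by auto
  qed
qed

lemma grid_cover:
  fixes T s :: real and N :: nat
  assumes T: "0 < T" and N: "N \<ge> 1" and s: "s \<in> {0..T}"
  obtains n where "n < N" "s \<in> {real n * T / real N .. real (n+1) * T / real N}"
proof -
  define u where "u = s * N / T"
  have sN: "0 \<le> u" using s T unfolding u_def by auto
  define k where "k = nat \<lfloor>u\<rfloor>"
  have kf: "real k = of_int \<lfloor>u\<rfloor>" unfolding k_def using sN by simp
  have k1: "real k \<le> u" "u < real k + 1" using kf by linarith+
  define n where "n = min (N - 1) k"
  have "n < N" using N unfolding n_def by auto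
  moreover have "real n * T / real N \<le> s"
  proof -
    have "real n \<le> u" unfolding n_def using k1 by auto
    then show ?thesis using T N unfolding u_def by (simp add: field_simps)
  qed
  moreover have "s \<le> real (n+1) * T / real N"
  proof (cases "k \<le> N - 1")
    case True
    then have "n = k" unfolding n_def by auto
    then have "u \<le> real (n+1)" using k1 by auto
    then show ?thesis using T N unfolding u_def by (simp add: field_simps)
  next
    case False
    then have "n = N - 1" unfolding n_def by auto
    then have "real (n+1) = real N" using N by auto
    then show ?thesis using s N by auto
  qed
  ultimately show ?thesis using that by auto
qed

lemma integral_approx:
  fixes f :: "real \<Rightarrow> real" and a b c d :: real
  assumes ab: "a \<le> b" and fc: "continuous_on {a..b} f"
    and bd: "\<And>s. s \<in> {a..b} \<Longrightarrow> \<bar>f s - c\<bar> \<le> d"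
  shows "\<bar>integral {a..b} f - (b - a) * c\<bar> \<le> (b - a) * d"
proof -
  have fi: "f integrable_on {a..b}" using fc integrable_continuous_real by blast
  have "integral {a..b} (\<lambda>s. f s - c) = integral {a..b} f - (b - a) * c"
  proof -
    have "integral {a..b} (\<lambda>s. f s - c) = integral {a..b} f - integral {a..b} (\<lambda>s. c)"
      by (rule integral_diff[OF fi]) (simp add: integrable_const_ivl)
    then show ?thesis using ab by simp
  qed
  moreover have "norm (integral {a..b} (\<lambda>s. f s - c)) \<le> d * (b - a)"
    apply (rule integral_bound[OF ab])
    using fc bd by (auto intro!: continuous_intros)
  ultimately have "\<bar>integral {a..b} f - (b - a) * c\<bar> \<le> d * (b - a)" using ab by (simp add: cbox_interval)
  then show ?thesis by (simp add: mult.commute)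
qed

lemma cube_lip:
  fixes a b M :: real
  assumes "\<bar>a\<bar> \<le> M" "\<bar>b\<bar> \<le> M"
  shows "\<bar>a^3 - b^3\<bar> \<le> 3 * M^2 * \<bar>a - b\<bar>"
proof -
  have e: "a^3 - b^3 = (a - b) * (a^2 + a*b + b^2)" by (simp add: power2_eq_square power3_eq_cube algebra_simps)
  have "\<bar>a^2 + a*b + b^2\<bar> \<le> a^2 + \<bar>a\<bar>*\<bar>b\<bar> + b^2"
    by (simp add: abs_triangle_ineq order_trans[OF abs_triangle_ineq] abs_mult power2_eq_square)
  also have "\<dots> \<le> M^2 + M*M + M^2"
  proof -
    have "a^2 \<le> M^2" "b^2 \<le> M^2" using assms power_mono[of "\<bar>a\<bar>" M 2] power_mono[of "\<bar>b\<bar>" M 2] by auto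
    moreover have "\<bar>a\<bar>*\<bar>b\<bar> \<le> M*M" using assms by (intro mult_mono) auto
    ultimately show ?thesis by linarith
  qed
  also have "\<dots> = 3 * M^2" by (simp add: power2_eq_square)
  finally have "\<bar>a^2 + a*b + b^2\<bar> \<le> 3 * M^2" .
  then show ?thesis unfolding e abs_mult
    by (metis abs_ge_zero mult.commute mult_right_mono)
qed



lemma euler_det:
  fixes x w :: "real \<Rightarrow> real" and y :: "nat \<Rightarrow> real \<Rightarrow> real" and D :: "real \<Rightarrow> real set"
    and T \<epsilon> :: real
  assumes T: "0 < T"
    and xc: "continuous_on {0..T} x" and wc: "continuous_on {0..T} w"
    and xeq: "\<And>N n. N \<ge> 1 \<Longrightarrow> n < N \<Longrightarrow> x (real (n+1)*T/real N) = x (real n*T/real N)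
       - integral {real n*T/real N..real (n+1)*T/real N} (\<lambda>s. x s ^ 3)
       + (w (real (n+1)*T/real N) - w (real n*T/real N))"
    and Dm: "\<And>t1 t2. 0 < t1 \<Longrightarrow> t1 \<le> t2 \<Longrightarrow> t2 \<le> T \<Longrightarrow> D t2 \<subseteq> D t1"
    and Dc: "(\<Union>t\<in>{0<..T}. interior (D t)) = UNIV"
    and y0: "\<And>N. N \<ge> 1 \<Longrightarrow> y N 0 = x 0"
    and ys: "\<And>N n t. N \<ge> 1 \<Longrightarrow> n < N \<Longrightarrow> t \<in> {real n*T/real N..real (n+1)*T/real N} \<Longrightarrow>
       y N t = y N (real n*T/real N) + indicator (D (T/real N)) (y N (real n*T/real N))
         * (w t - w (real n*T/real N) - (y N (real n*T/real N))^3 * (t - real n*T/real N))"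
    and e: "\<epsilon> > 0"
  shows "eventually (\<lambda>K. \<forall>s\<in>{0..T}. \<bar>x s - y K s\<bar> \<le> \<epsilon>) sequentially"
proof -
  have "bounded (x ` {0..T})" using compact_continuous_image[OF xc compact_Icc] compact_imp_bounded by blast
  then obtain R0 where R0: "\<forall>s\<in>{0..T}. \<bar>x s\<bar> \<le> R0" unfolding bounded_iff by auto
  define R where "R = max R0 0"
  have R: "\<And>s. s \<in> {0..T} \<Longrightarrow> \<bar>x s\<bar> \<le> R" "R \<ge> 0" using R0 unfolding R_def by (force, simp)
  obtain t0 where t0: "0 < t0" "t0 \<le> T" "\<And>h. 0 < h \<Longrightarrow> h \<le> t0 \<Longrightarrow> cball 0 (R+1) \<subseteq> D h"
    using cover_small[OF T Dm Dc] by blast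
  define L where "L = 3*(R+1)^2"
  have L: "L \<ge> 0" unfolding L_def by auto
  define \<eta> where "\<eta> = min 1 (\<epsilon>/4)"
  have \<eta>: "0 < \<eta>" "\<eta> \<le> 1" "\<eta> \<le> \<epsilon>/4" using e unfolding \<eta>_def by auto
  define \<delta> where "\<delta> = \<eta> / (T * exp (L*T))"
  have \<delta>: "\<delta> > 0" "\<delta> * (T * exp (L*T)) = \<eta>" using \<eta> T unfolding \<delta>_def by auto
  have xc3: "continuous_on {0..T} (\<lambda>s. x s ^ 3)" using xc by (intro continuous_intros)
  obtain d1 where d1: "d1 > 0" "\<And>s s'. s \<in> {0..T} \<Longrightarrow> s' \<in> {0..T} \<Longrightarrow> \<bar>s' - s\<bar> < d1 \<Longrightarrow> \<bar>x s' ^ 3 - x s ^ 3\<bar> < \<delta>"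
    using compact_uniformly_continuous[OF xc3 compact_Icc] \<delta> unfolding uniformly_continuous_on_def dist_real_def
    by metis
  obtain d2 where d2: "d2 > 0" "\<And>s s'. s \<in> {0..T} \<Longrightarrow> s' \<in> {0..T} \<Longrightarrow> \<bar>s' - s\<bar> < d2 \<Longrightarrow> \<bar>x s' - x s\<bar> < \<epsilon>/4"
    using compact_uniformly_continuous[OF xc compact_Icc] e unfolding uniformly_continuous_on_def dist_real_def
    by (metis zero_less_divide_iff zero_less_numeral)
  obtain d3 where d3: "d3 > 0" "\<And>s s'. s \<in> {0..T} \<Longrightarrow> s' \<in> {0..T} \<Longrightarrow> \<bar>s' - s\<bar> < d3 \<Longrightarrow> \<bar>w s' - w s\<bar> < \<epsilon>/4"
    using compact_uniformly_continuous[OF wc compact_Icc] e unfolding uniformly_continuous_on_def dist_real_def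
    by (metis zero_less_divide_iff zero_less_numeral)
  define hm where "hm = min (min d1 d2) (min (min d3 t0) (\<epsilon> / (4 * ((R+1)^3 + 1))))"
  have R3: "0 \<le> (R+1)^3" using R(2) by simp
  have "0 < \<epsilon> / (4 * ((R+1)^3 + 1))" using e R3 by (intro divide_pos_pos) (auto intro!: mult_pos_pos add_nonneg_pos simp del: )
  then have hm: "hm > 0" unfolding hm_def using d1 d2 d3 t0 by auto
  obtain N0 :: nat where N0: "T / hm < real N0" using reals_Archimedean2 by blast
  have "0 < T / hm" using T hm by simp
  then have "0 < real N0" using N0 by linarith
  then have N0pos: "N0 \<ge> 1" by simp
  show ?thesis unfolding eventually_sequentially
  proof (intro exI allI impI)
    fix K assume KN0: "N0 \<le> K"
    then have K1: "K \<ge> 1" using N0pos by auto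
    define h where "h = T / real K"
    have hpos: "h > 0" using T K1 unfolding h_def by auto
    have hhm: "h < hm"
    proof -
      have "T / hm < real K" using N0 KN0 by (meson of_nat_le_iff order_less_le_trans)
      then show ?thesis unfolding h_def using hm K1 T by (simp add: field_simps)
    qed
    have hT: "h \<le> T" unfolding h_def using T K1 by (simp add: divide_le_eq)
    define tg where "tg n = real n * T / real K" for n
    have tgh: "tg n = real n * h" for n unfolding tg_def h_def by simp
    have tgS: "tg (n+1) = tg n + h" "tg (Suc n) = tg n + h" for n unfolding tgh by (simp_all add: algebra_simps)
    have tgin: "tg n \<in> {0..T}" if "n \<le> K" for n
    proof -
      have "real n * h \<le> real K * h" using that hpos by (simp add: mult_right_mono)
      moreover have "real K * h = T" using K1 unfolding h_def by simp
      moreover have "0 \<le> real n * h" using hpos by simp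
      ultimately show ?thesis unfolding tgh by auto
    qed
    have bnd: "real n * h * \<delta> * (1 + L*h)^n \<le> \<eta>" if "n \<le> K" for n
    proof -
      have a: "real n * h \<le> T" using tgin[OF that] tgh by auto
      have "(1 + L*h)^n \<le> exp (L*h)^n"
        by (intro power_mono) (use L hpos in \<open>auto simp: exp_ge_add_one_self\<close>)
      also have "\<dots> = exp (real n * (L*h))" by (simp add: exp_of_nat_mult)
      also have "\<dots> \<le> exp (L*T)" using a L by (simp add: mult_left_mono mult.assoc mult.left_commute)
      finally have b: "(1 + L*h)^n \<le> exp (L*T)" .
      have "real n * h * \<delta> * (1 + L*h)^n = \<delta> * ((real n * h) * (1 + L*h)^n)" by simp
      also have "\<dots> \<le> \<delta> * (T * exp (L*T))"
        using a b \<delta> hpos L T by (intro mult_left_mono mult_mono) auto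
      finally show ?thesis using \<delta> by simp
    qed
    have Dh: "cball 0 (R+1) \<subseteq> D h" using t0(3)[OF hpos] hhm unfolding hm_def by auto
    have E: "\<bar>x (tg n) - y K (tg n)\<bar> \<le> real n * h * \<delta> * (1 + L*h)^n" if "n \<le> K" for n
      using that
    proof (induction n)
      case 0
      then show ?case using y0[OF K1] by (simp add: tg_def)
    next
      case (Suc n)
      then have nK: "n < K" "n \<le> K" by auto
      have IH: "\<bar>x (tg n) - y K (tg n)\<bar> \<le> real n * h * \<delta> * (1 + L*h)^n" using Suc nK by auto
      have en1: "\<bar>x (tg n) - y K (tg n)\<bar> \<le> 1" using IH bnd[OF nK(2)] \<eta> by auto
      have xn: "\<bar>x (tg n)\<bar> \<le> R" using R tgin nK by auto
      have yn: "\<bar>y K (tg n)\<bar> \<le> R + 1" using xn en1 by auto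
      then have ynD: "y K (tg n) \<in> D h" using Dh by (auto simp: dist_real_def)
      have ystep: "y K (tg (n+1)) = y K (tg n) + (w (tg (n+1)) - w (tg n) - (y K (tg n))^3 * h)"
        using ys[OF K1 nK(1), of "tg (n+1)"] ynD unfolding tg_def[symmetric] h_def[symmetric]
        by (simp add: tgS hpos less_imp_le)
      have xstep: "x (tg (n+1)) = x (tg n) - integral {tg n..tg (n+1)} (\<lambda>s. x s ^ 3) + (w (tg (n+1)) - w (tg n))"
        using xeq[OF K1 nK(1)] unfolding tg_def by simp
      have sub: "{tg n..tg (n+1)} \<subseteq> {0..T}" using tgin[OF nK(2)] tgin[of "n+1"] Suc.prems by auto
      have I: "\<bar>integral {tg n..tg (n+1)} (\<lambda>s. x s ^ 3) - (tg (n+1) - tg n) * x (tg n) ^ 3\<bar> \<le> (tg (n+1) - tg n) * \<delta>"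
      proof (rule integral_approx)
        show "tg n \<le> tg (n+1)" using tgS hpos by auto
        show "continuous_on {tg n..tg (n+1)} (\<lambda>s. x s ^ 3)" using continuous_on_subset[OF xc3 sub] .
        fix s assume s: "s \<in> {tg n..tg (n+1)}"
        have "\<bar>s - tg n\<bar> < d1" using s tgS hhm unfolding hm_def by auto
        then show "\<bar>x s ^ 3 - x (tg n) ^ 3\<bar> \<le> \<delta>" using d1(2)[of "tg n" s] s sub tgin[OF nK(2)] by force
      qed
      have I': "\<bar>integral {tg n..tg (n+1)} (\<lambda>s. x s ^ 3) - h * x (tg n) ^ 3\<bar> \<le> h * \<delta>" using I tgS by simp
      have cl: "\<bar>x (tg n) ^ 3 - y K (tg n) ^ 3\<bar> \<le> L * \<bar>x (tg n) - y K (tg n)\<bar>"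
        unfolding L_def using cube_lip[of "x (tg n)" "R+1" "y K (tg n)"] xn yn by auto
      define en where "en = x (tg n) - y K (tg n)"
      have "x (tg (n+1)) - y K (tg (n+1)) = en - (integral {tg n..tg (n+1)} (\<lambda>s. x s ^ 3) - h * x (tg n) ^ 3)
          - h * (x (tg n) ^ 3 - y K (tg n) ^ 3)"
        unfolding en_def xstep ystep by (simp only: right_diff_distrib mult.commute)
      have "\<bar>x (tg (n+1)) - y K (tg (n+1))\<bar> \<le> \<bar>en\<bar> + h * \<delta> + h * (L * \<bar>en\<bar>)"
      proof -
        have c1: "\<bar>h * (x (tg n) ^ 3 - y K (tg n) ^ 3)\<bar> \<le> h * (L * \<bar>en\<bar>)"
          using cl hpos unfolding en_def[symmetric] by (simp add: abs_mult mult_left_mono)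
        have tri: "\<And>a b c::real. \<bar>a - b - c\<bar> \<le> \<bar>a\<bar> + \<bar>b\<bar> + \<bar>c\<bar>" by arith
        show ?thesis unfolding \<open>x (tg (n+1)) - y K (tg (n+1)) = _\<close>
          using tri[of en "integral {tg n..tg (n+1)} (\<lambda>s. x s ^ 3) - h * x (tg n) ^ 3" "h * (x (tg n) ^ 3 - y K (tg n) ^ 3)"] c1 I' by linarith
      qed
      also have "\<dots> = (1 + L*h) * \<bar>en\<bar> + h * \<delta>" by (simp add: algebra_simps)
      also have "\<dots> \<le> (1 + L*h) * (real n * h * \<delta> * (1 + L*h)^n) + h * \<delta>"
        using IH L hpos unfolding en_def by (intro add_mono mult_left_mono) auto
      also have "\<dots> \<le> real (Suc n) * h * \<delta> * (1 + L*h)^(Suc n)"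
      proof -
        have "1 \<le> (1 + L*h)^(Suc n)" using L hpos by (intro one_le_power) auto
        then have "h * \<delta> \<le> h * \<delta> * (1 + L*h)^(Suc n)" using hpos \<delta> by auto
        then show ?thesis by (simp add: algebra_simps)
      qed
      finally show ?case by (simp add: tgS)
    qed
    show "\<forall>s\<in>{0..T}. \<bar>x s - y K s\<bar> \<le> \<epsilon>"
    proof
      fix s assume s: "s \<in> {0..T}"
      obtain n where n: "n < K" "s \<in> {tg n..tg (n+1)}" using grid_cover[OF T K1 s] unfolding tg_def by blast
      have en: "\<bar>x (tg n) - y K (tg n)\<bar> \<le> \<eta>" using E[of n] bnd[of n] n by auto
      have xn: "\<bar>x (tg n)\<bar> \<le> R" using R tgin n by auto
      have yn: "\<bar>y K (tg n)\<bar> \<le> R + 1" using xn en \<eta> by auto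
      then have ynD: "y K (tg n) \<in> D h" using Dh by (auto simp: dist_real_def)
      have ysv: "y K s = y K (tg n) + (w s - w (tg n) - (y K (tg n))^3 * (s - tg n))"
        using ys[OF K1 n(1), of s] ynD n(2) unfolding tg_def[symmetric] h_def[symmetric] by simp
      have tn: "tg n \<in> {0..T}" using tgin n by auto
      have sd: "\<bar>s - tg n\<bar> < hm" "s - tg n \<le> h" "0 \<le> s - tg n" using n(2) tgS hhm by auto
      have a1: "\<bar>x s - x (tg n)\<bar> < \<epsilon>/4" using d2(2)[OF tn s] sd unfolding hm_def by auto
      have a2: "\<bar>w s - w (tg n)\<bar> < \<epsilon>/4" using d3(2)[OF tn s] sd unfolding hm_def by auto
      have a3: "\<bar>(y K (tg n))^3 * (s - tg n)\<bar> \<le> \<epsilon>/4"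
      proof -
        have "\<bar>y K (tg n)\<bar>^3 \<le> (R+1)^3" using yn by (intro power_mono) auto
        then have "\<bar>(y K (tg n))^3 * (s - tg n)\<bar> \<le> ((R+1)^3 + 1) * h"
        proof -
          have "\<bar>y K (tg n)\<bar>^3 * (s - tg n) \<le> (R+1)^3 * h"
            by (rule mult_mono) (use sd R3 \<open>\<bar>y K (tg n)\<bar>^3 \<le> (R+1)^3\<close> in auto)
          moreover have "\<bar>(y K (tg n))^3 * (s - tg n)\<bar> = \<bar>y K (tg n)\<bar>^3 * (s - tg n)"
            using sd by (simp add: abs_mult power_abs)
          ultimately show ?thesis using hpos by (simp add: distrib_right)
        qed
        also have "\<dots> \<le> ((R+1)^3 + 1) * (\<epsilon> / (4 * ((R+1)^3 + 1)))"
          using hhm R unfolding hm_def by (intro mult_left_mono) (auto simp: add_nonneg_nonneg)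
        also have "\<dots> = \<epsilon>/4"
        proof -
          have gen: "\<And>c::real. c > 0 \<Longrightarrow> c * (\<epsilon> / (4*c)) = \<epsilon>/4" by simp
          have "(R+1)^3 + 1 > 0" using R3 by linarith
          from gen[OF this] show ?thesis .
        qed
        finally show ?thesis .
      qed
      have "x s - y K s = (x s - x (tg n)) + (x (tg n) - y K (tg n)) - (w s - w (tg n)) + (y K (tg n))^3 * (s - tg n)"
        unfolding ysv by (simp add: algebra_simps)
      then show "\<bar>x s - y K s\<bar> \<le> \<epsilon>" using a1 a2 a3 en \<eta> by linarith
    qed
  qed
qed



lemma ae_eventually_measure_tendsto:
  assumes "prob_space M" and A: "\<And>K. A K \<in> sets M"
    and ae: "AE \<omega> in M. eventually (\<lambda>K. \<omega> \<notin> A K) sequentially"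
  shows "(\<lambda>K. measure M (A K)) \<longlonglongrightarrow> 0"
proof -
  interpret prob_space M by fact
  define B where "B K = (\<Union>j\<in>{K..}. A j)" for K
  have Bs: "range B \<subseteq> sets M" unfolding B_def using A by auto
  have Bd: "decseq B" unfolding B_def decseq_def by (auto, meson atLeast_iff order_trans)
  have lim: "(\<lambda>K. measure M (B K)) \<longlonglongrightarrow> measure M (\<Inter>i. B i)"
    by (rule finite_Lim_measure_decseq[OF Bs Bd])
  have "(\<Inter>i. B i) \<subseteq> {\<omega>\<in>space M. \<not> eventually (\<lambda>K. \<omega> \<notin> A K) sequentially}"
  proof
    fix \<omega> assume w: "\<omega> \<in> (\<Inter>i. B i)"
    then have "\<omega> \<in> space M" using Bs sets.sets_into_space by (auto simp: B_def) (use A sets.sets_into_space in blast)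
    moreover have "\<not> eventually (\<lambda>K. \<omega> \<notin> A K) sequentially"
    proof
      assume "eventually (\<lambda>K. \<omega> \<notin> A K) sequentially"
      then obtain K0 where "\<And>K. K \<ge> K0 \<Longrightarrow> \<omega> \<notin> A K" unfolding eventually_sequentially by auto
      moreover have "\<omega> \<in> B K0" using w by auto
      ultimately show False unfolding B_def by auto
    qed
    ultimately show "\<omega> \<in> {\<omega>\<in>space M. \<not> eventually (\<lambda>K. \<omega> \<notin> A K) sequentially}" by auto
  qed
  moreover have "(\<Inter>i. B i) \<in> sets M" using Bs by auto
  moreover obtain N where N: "N \<in> null_sets M" "{\<omega>\<in>space M. \<not> eventually (\<lambda>K. \<omega> \<notin> A K) sequentially} \<subseteq> N"
    using ae unfolding eventually_ae_filter by auto
  ultimately have "measure M (\<Inter>i. B i) = 0"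
    by (metis (no_types, lifting) measure_eq_0_null_sets null_sets_subset subset_trans)
  then have limB: "(\<lambda>K. measure M (B K)) \<longlonglongrightarrow> 0" using lim by simp
  show ?thesis
  proof (rule tendsto_sandwich[OF _ _ tendsto_const limB])
    show "\<forall>\<^sub>F n in sequentially. 0 \<le> measure M (A n)" by auto
    show "\<forall>\<^sub>F n in sequentially. measure M (A n) \<le> measure M (B n)"
    proof (intro always_eventually allI)
      fix n show "measure M (A n) \<le> measure M (B n)"
        by (rule finite_measure_mono) (use Bs in \<open>auto simp: B_def\<close>)
    qed
  qed
qed

lemma rat_witness:
  fixes f :: "real \<Rightarrow> real" and T p s :: real
  assumes T: "0 < T" and fc: "continuous_on {0..T} f" and s: "s \<in> {0..T}" and fs: "f s > p"
  shows "\<exists>r\<in>\<rat>. r \<in> {0..T} \<and> f r > p"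
proof -
  obtain d where d: "d > 0" "\<And>x'. x' \<in> {0..T} \<Longrightarrow> dist x' s < d \<Longrightarrow> dist (f x') (f s) < f s - p"
    using fc s fs unfolding continuous_on_iff by (metis diff_gt_0_iff_gt)
  have close: "f r > p" if "r \<in> {0..T}" "\<bar>r - s\<bar> < d" for r
    using d(2)[OF that(1)] that(2) by (auto simp: dist_real_def)
  show ?thesis
  proof (cases "s < T")
    case True
    then obtain r where "r \<in> \<rat>" "s < r" "r < min (s + d) T" using Rats_dense_in_real[of s "min (s+d) T"] d by auto
    then have "r \<in> {0..T}" "\<bar>r - s\<bar> < d" using s by auto
    then show ?thesis using close[of r] \<open>r \<in> \<rat>\<close> by blast
  next
    case False
    then have sT: "s = T" using s by auto
    then obtain r where "r \<in> \<rat>" "max (T - d) 0 < r" "r < T" using Rats_dense_in_real[of "max (T - d) 0" T] d T by auto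
    then have "r \<in> {0..T}" "\<bar>r - s\<bar> < d" using sT by auto
    then show ?thesis using close[of r] \<open>r \<in> \<rat>\<close> by blast
  qed
qed

lemma sup_gt_rat:
  fixes f :: "real \<Rightarrow> real" and T p :: real
  assumes T: "0 < T" and fc: "continuous_on {0..T} f"
  shows "(SUP s\<in>{0..T}. f s) > p \<longleftrightarrow> (\<exists>r\<in>\<rat> \<inter> {0..T}. f r > p)"
proof -
  have bdd: "bdd_above (f ` {0..T})"
    by (meson compact_continuous_image[OF fc compact_Icc] compact_imp_bounded bounded_imp_bdd_above)
  have ne: "{0..T} \<noteq> {}" using T by auto
  have "(SUP s\<in>{0..T}. f s) > p \<longleftrightarrow> (\<exists>s\<in>{0..T}. p < f s)" using less_cSUP_iff[OF ne bdd] by simp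
  also have "\<dots> \<longleftrightarrow> (\<exists>r\<in>\<rat> \<inter> {0..T}. f r > p)"
    using rat_witness[OF T fc] by blast
  finally show ?thesis .
qed



lemma growth:
  fixes p q \<sigma> c0 K :: real
  assumes p: "p > 0" and q: "q > 2" and \<sigma>: "\<sigma> > 0" and c0: "c0 \<ge> 0" and K: "K > 0"
  shows "\<exists>r>c0. K \<le> exp (p * (r - c0) powr q) * normal_density 0 \<sigma> (r + 1)"
proof -
  define k where "k = 1 / sqrt (2 * pi * \<sigma>^2)"
  have k: "k > 0" unfolding k_def using \<sigma> by auto
  define a where "a = q - 2"
  have a: "a > 0" using q unfolding a_def by auto
  define Mv where "Mv = (2 / \<sigma>^2 + 1) / p"
  have Mv: "Mv > 0" unfolding Mv_def using p \<sigma> by (auto intro!: divide_pos_pos add_pos_pos)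
  define v where "v = max (max (c0 + 1) 1) (max (Mv powr (1/a)) (\<bar>ln (K/k)\<bar> + 1))"
  have v1: "v \<ge> c0 + 1" "v \<ge> 1" "v \<ge> Mv powr (1/a)" "v \<ge> \<bar>ln (K/k)\<bar> + 1" unfolding v_def by auto
  have vpos: "v > 0" using v1 by auto
  define r where "r = v + c0"
  have rc: "r > c0" "r - c0 = v" unfolding r_def using vpos by auto
  have va: "v powr a \<ge> Mv"
  proof -
    have "(Mv powr (1/a)) powr a \<le> v powr a" using v1 a Mv by (intro powr_mono2) auto
    moreover have "(Mv powr (1/a)) powr a = Mv" using a Mv by (simp add: powr_powr)
    ultimately show ?thesis by simp
  qed
  have vq: "v powr q = v^2 * v powr a"
  proof -
    have "v powr q = v powr (2 + a)" unfolding a_def by simp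
    also have "\<dots> = v powr 2 * v powr a" by (rule powr_add)
    also have "v powr 2 = v^2" using vpos by (simp add: powr_numeral)
    finally show ?thesis .
  qed
  have r1: "(r + 1)^2 \<le> 4 * v^2"
  proof -
    have "0 \<le> r + 1" "r + 1 \<le> 2 * v" using v1 c0 unfolding r_def by auto
    then have "(r + 1)^2 \<le> (2 * v)^2" by (intro power_mono) auto
    then show ?thesis by (simp add: power_mult_distrib)
  qed
  have "p * v powr q \<ge> v^2 * (p * Mv)"
  proof -
    have e1: "p * v powr q = v^2 * (p * v powr a)" using vq by simp
    have "p * v powr a \<ge> p * Mv" using va p by (intro mult_left_mono) auto
    then have "v^2 * (p * Mv) \<le> v^2 * (p * v powr a)" by (rule mult_left_mono) auto
    then show ?thesis using e1 by linarith
  qed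
  moreover have "p * Mv = 2 / \<sigma>^2 + 1" unfolding Mv_def using p by simp
  moreover have "(r + 1)^2 / (2 * \<sigma>^2) \<le> v^2 * (2 / \<sigma>^2)"
  proof -
    have "(r + 1)^2 / (2 * \<sigma>^2) \<le> 4 * v^2 / (2 * \<sigma>^2)" using r1 \<sigma> by (intro divide_right_mono) auto
    also have "\<dots> = v^2 * (2 / \<sigma>^2)" by (simp add: field_simps)
    finally show ?thesis .
  qed
  ultimately have ex: "p * v powr q - (r + 1)^2 / (2 * \<sigma>^2) \<ge> v^2"
  proof -
    assume f1: "p * v powr q \<ge> v^2 * (p * Mv)" and f2: "p * Mv = 2 / \<sigma>^2 + 1"
      and f3: "(r + 1)^2 / (2 * \<sigma>^2) \<le> v^2 * (2 / \<sigma>^2)"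
    have "v^2 * (p * Mv) = v^2 + v^2 * (2 / \<sigma>^2)" unfolding f2 by (simp add: algebra_simps)
    then show ?thesis using f1 f3 by linarith
  qed
  have "v^2 \<ge> v" using v1 by (simp add: power2_eq_square)
  then have ex2: "p * v powr q - (r + 1)^2 / (2 * \<sigma>^2) \<ge> ln (K/k)" using ex v1 by linarith
  have nd: "normal_density 0 \<sigma> (r + 1) = k * exp (-((r + 1)^2 / (2 * \<sigma>^2)))"
    unfolding normal_density_def k_def by simp
  have "exp (p * v powr q) * normal_density 0 \<sigma> (r + 1) = k * exp (p * v powr q - (r + 1)^2 / (2 * \<sigma>^2))"
    unfolding nd by (simp add: exp_diff exp_minus field_simps)
  also have "\<dots> \<ge> k * exp (ln (K/k))" using ex2 k by (intro mult_left_mono) auto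
  also have "k * exp (ln (K/k)) = K" using k K by simp
  finally show ?thesis using rc by metis
qed

lemma nd_lower:
  fixes \<sigma> g B :: real
  assumes "\<sigma> > 0" "\<bar>g\<bar> \<le> B"
  shows "normal_density 0 \<sigma> B \<le> normal_density 0 \<sigma> g"
proof -
  have "\<bar>g\<bar>^2 \<le> B^2" using assms by (intro power_mono) auto
  then have "g^2 \<le> B^2" by simp
  then have "exp (-(B^2 / (2 * \<sigma>^2))) \<le> exp (-(g^2 / (2 * \<sigma>^2)))"
    using assms by (auto intro!: divide_right_mono)
  then show ?thesis unfolding normal_density_def by (simp add: divide_right_mono)
qed

lemma gauss_step_pos:
  fixes M :: "'a measure" and Z G :: "'a \<Rightarrow> real" and \<sigma> h R :: real and S :: "real set"
  assumes M: "prob_space M"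
    and Zm: "Z \<in> borel_measurable M"
    and Gd: "distributed M lborel G (\<lambda>x. ennreal (normal_density 0 \<sigma> x))"
    and \<sigma>: "\<sigma> > 0"
    and ind: "\<And>A B. A \<in> sets borel \<Longrightarrow> B \<in> sets borel \<Longrightarrow>
       emeasure M {\<omega>\<in>space M. Z \<omega> \<in> A \<and> G \<omega> \<in> B}
         = emeasure M {\<omega>\<in>space M. Z \<omega> \<in> A} * emeasure M {\<omega>\<in>space M. G \<omega> \<in> B}"
    and Sb: "S \<in> sets borel" and SR: "S \<subseteq> {-R..R}" and Sl: "emeasure lborel S > 0"
    and SZ: "emeasure M {\<omega>\<in>space M. Z \<omega> \<in> S} > 0" and h: "0 \<le> h"
  shows "emeasure M {\<omega>\<in>space M. Z \<omega> \<in> S \<and> Z \<omega> + G \<omega> - Z \<omega> ^ 3 * h \<in> S} > 0"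
proof -
  interpret prob_space M by fact
  have Gm: "G \<in> borel_measurable M" using Gd unfolding distributed_def by auto
  have Zm': "Z \<in> measurable M lborel" "G \<in> measurable M lborel" using Zm Gm by auto
  define M1 where "M1 = distr M lborel Z"
  define M2 where "M2 = distr M lborel G"
  have M2d: "M2 = density lborel (\<lambda>x. ennreal (normal_density 0 \<sigma> x))"
    using Gd unfolding distributed_def M2_def by auto
  have sf1: "sigma_finite_measure M1" unfolding M1_def
    using prob_space_distr[OF Zm'(1)] prob_space_imp_sigma_finite by blast
  have sf2: "sigma_finite_measure M2" unfolding M2_def
    using prob_space_distr[OF Zm'(2)] prob_space_imp_sigma_finite by blast
  have pm: "(\<lambda>\<omega>. (Z \<omega>, G \<omega>)) \<in> measurable M (lborel \<Otimes>\<^sub>M lborel)" using Zm' by measurable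
  have sM1: "sets M1 = sets lborel" "sets M2 = sets lborel" unfolding M1_def M2_def by auto
  have pair_eq: "M1 \<Otimes>\<^sub>M M2 = distr M (lborel \<Otimes>\<^sub>M lborel) (\<lambda>\<omega>. (Z \<omega>, G \<omega>))"
  proof (rule pair_measure_eqI[OF sf1 sf2])
    show "sets (M1 \<Otimes>\<^sub>M M2) = sets (distr M (lborel \<Otimes>\<^sub>M lborel) (\<lambda>\<omega>. (Z \<omega>, G \<omega>)))"
      using sets_pair_measure_cong[OF sM1] by simp
    fix A B assume A: "A \<in> sets M1" and B: "B \<in> sets M2"
    then have A': "A \<in> sets borel" "B \<in> sets borel" using sM1 by auto
    have "emeasure M1 A = emeasure M {\<omega>\<in>space M. Z \<omega> \<in> A}"
      unfolding M1_def using A' by (subst emeasure_distr[OF Zm'(1)]) (auto intro!: arg_cong[where f="emeasure M"])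
    moreover have "emeasure M2 B = emeasure M {\<omega>\<in>space M. G \<omega> \<in> B}"
      unfolding M2_def using A' by (subst emeasure_distr[OF Zm'(2)]) (auto intro!: arg_cong[where f="emeasure M"])
    moreover have "emeasure (distr M (lborel \<Otimes>\<^sub>M lborel) (\<lambda>\<omega>. (Z \<omega>, G \<omega>))) (A \<times> B)
        = emeasure M {\<omega>\<in>space M. Z \<omega> \<in> A \<and> G \<omega> \<in> B}"
      using A' by (subst emeasure_distr[OF pm]) (auto intro!: arg_cong[where f="emeasure M"])
    ultimately show "emeasure M1 A * emeasure M2 B = emeasure (distr M (lborel \<Otimes>\<^sub>M lborel) (\<lambda>\<omega>. (Z \<omega>, G \<omega>))) (A \<times> B)"
      using ind[OF A'] by simp
  qed
  define C where "C = {x \<in> space (lborel \<Otimes>\<^sub>M lborel). fst x \<in> S \<and> fst x + snd x - fst x ^ 3 * h \<in> S}"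
  have Cm: "C \<in> sets (lborel \<Otimes>\<^sub>M lborel)" unfolding C_def using Sb by measurable
  have "emeasure M {\<omega>\<in>space M. Z \<omega> \<in> S \<and> Z \<omega> + G \<omega> - Z \<omega> ^ 3 * h \<in> S}
      = emeasure (distr M (lborel \<Otimes>\<^sub>M lborel) (\<lambda>\<omega>. (Z \<omega>, G \<omega>))) C"
    by (subst emeasure_distr[OF pm Cm]) (auto simp: C_def space_pair_measure intro!: arg_cong[where f="emeasure M"])
  also have "\<dots> = emeasure (M1 \<Otimes>\<^sub>M M2) C" using pair_eq by simp
  also have "\<dots> = (\<integral>\<^sup>+z. emeasure M2 (Pair z -` C) \<partial>M1)"
    using sigma_finite_measure.emeasure_pair_measure_alt[OF sf2, of C M1] Cm sets_pair_measure_cong[OF sM1] by simp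
  finally have eq: "emeasure M {\<omega>\<in>space M. Z \<omega> \<in> S \<and> Z \<omega> + G \<omega> - Z \<omega> ^ 3 * h \<in> S}
     = (\<integral>\<^sup>+z. emeasure M2 (Pair z -` C) \<partial>M1)" .
  have Sne: "S \<noteq> {}" using Sl by auto
  then have R: "R \<ge> 0" using SR by auto
  have SRabs: "\<And>x. x \<in> S \<Longrightarrow> \<bar>x\<bar> \<le> R" using SR by (force simp: abs_le_iff subset_iff)
  define B where "B = 2 * R + R^3 * h"
  define c where "c = normal_density 0 \<sigma> B"
  have c: "c > 0" unfolding c_def normal_density_def using \<sigma> by auto
  have slice: "emeasure M2 (Pair z -` C) \<ge> ennreal c * emeasure lborel S * indicator S z" for z
  proof (cases "z \<in> S")
    case False then show ?thesis by simp
  next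
    case True
    define a where "a = z - z^3 * h"
    have sl: "Pair z -` C = {g. a + g \<in> S}" unfolding C_def a_def using True by (auto simp: space_pair_measure algebra_simps)
    have slm: "{g. a + g \<in> S} \<in> sets borel" using Sb by measurable
    have za: "\<bar>a\<bar> \<le> R + R^3 * h"
    proof -
      have zR: "\<bar>z\<bar> \<le> R" using True SRabs by auto
      have "\<bar>z\<bar>^3 \<le> R^3" using zR by (intro power_mono) auto
      then have "\<bar>z^3 * h\<bar> \<le> R^3 * h" using h by (simp add: abs_mult power_abs mult_right_mono)
      then show ?thesis unfolding a_def using zR by linarith
    qed
    have "ennreal c * indicator {g. a + g \<in> S} g \<le> ennreal (normal_density 0 \<sigma> g) * indicator {g. a + g \<in> S} g" for g
    proof (cases "a + g \<in> S")
      case True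
      then have "\<bar>a + g\<bar> \<le> R" using SRabs by auto
      then have "\<bar>g\<bar> \<le> B" unfolding B_def using za by linarith
      then show ?thesis using nd_lower[OF \<sigma>] True unfolding c_def by (auto intro!: ennreal_leI)
    qed simp
    then have "(\<integral>\<^sup>+g. ennreal c * indicator {g. a + g \<in> S} g \<partial>lborel) \<le> (\<integral>\<^sup>+g. ennreal (normal_density 0 \<sigma> g) * indicator {g. a + g \<in> S} g \<partial>lborel)"
      by (intro nn_integral_mono) auto
    moreover have "(\<integral>\<^sup>+g. ennreal c * indicator {g. a + g \<in> S} g \<partial>lborel) = ennreal c * emeasure lborel {g. a + g \<in> S}"
      using slm by (intro nn_integral_cmult_indicator) auto
    moreover have "emeasure lborel {g. a + g \<in> S} = emeasure lborel S"
    proof -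
      have "emeasure lborel S = emeasure (distr lborel borel ((+) a)) S" by (simp add: lborel_distr_plus)
      also have "\<dots> = emeasure lborel ((+) a -` S \<inter> space lborel)" using Sb by (subst emeasure_distr) auto
      also have "(+) a -` S \<inter> space lborel = {g. a + g \<in> S}" by auto
      finally show ?thesis by simp
    qed
    moreover have "emeasure M2 (Pair z -` C) = (\<integral>\<^sup>+g. ennreal (normal_density 0 \<sigma> g) * indicator {g. a + g \<in> S} g \<partial>lborel)"
      unfolding sl M2d using slm by (subst emeasure_density) auto
    ultimately show ?thesis using True by simp
  qed
  have i1: "(\<integral>\<^sup>+z. ennreal c * emeasure lborel S * indicator S z \<partial>M1) \<le> (\<integral>\<^sup>+z. emeasure M2 (Pair z -` C) \<partial>M1)"
    by (intro nn_integral_mono slice)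
  have i2: "(\<integral>\<^sup>+z. ennreal c * emeasure lborel S * indicator S z \<partial>M1) = ennreal c * emeasure lborel S * emeasure M1 S"
    using Sb sM1 by (intro nn_integral_cmult_indicator) auto
  have i3: "emeasure M1 S = emeasure M {\<omega>\<in>space M. Z \<omega> \<in> S}"
    unfolding M1_def using Sb by (subst emeasure_distr[OF Zm'(1)]) (auto intro!: arg_cong[where f="emeasure M"])
  have i4: "ennreal c * emeasure lborel S * emeasure M {\<omega>\<in>space M. Z \<omega> \<in> S} > 0"
    using c Sl SZ by (simp add: ennreal_zero_less_mult_iff)
  have "0 < (\<integral>\<^sup>+z. ennreal c * emeasure lborel S * indicator S z \<partial>M1)" unfolding i2 i3 using i4 .
  then have "0 < (\<integral>\<^sup>+z. emeasure M2 (Pair z -` C) \<partial>M1)" using i1 by (rule order_less_le_trans)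
  then show ?thesis unfolding eq .
qed

lemma gauss_exp_infty:
  fixes M :: "'a measure" and Z G Yv :: "'a \<Rightarrow> real" and \<sigma> u R p q :: real and S :: "real set"
  assumes M: "prob_space M"
    and Zm: "Z \<in> borel_measurable M"
    and Gd: "distributed M lborel G (\<lambda>x. ennreal (normal_density 0 \<sigma> x))"
    and \<sigma>: "\<sigma> > 0"
    and ind: "\<And>A B. A \<in> sets borel \<Longrightarrow> B \<in> sets borel \<Longrightarrow>
       emeasure M {\<omega>\<in>space M. Z \<omega> \<in> A \<and> G \<omega> \<in> B}
         = emeasure M {\<omega>\<in>space M. Z \<omega> \<in> A} * emeasure M {\<omega>\<in>space M. G \<omega> \<in> B}"
    and Sb: "S \<in> sets borel" and SR: "S \<subseteq> {-R..R}"
    and SZ: "emeasure M {\<omega>\<in>space M. Z \<omega> \<in> S} > 0" and u: "0 \<le> u"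
    and Yeq: "\<And>\<omega>. \<omega> \<in> space M \<Longrightarrow> Z \<omega> \<in> S \<Longrightarrow> Yv \<omega> = Z \<omega> + G \<omega> - Z \<omega> ^ 3 * u"
    and p: "p > 0" and q: "q > 2"
  shows "(\<integral>\<^sup>+\<omega>. ennreal (exp (p * \<bar>Yv \<omega>\<bar> powr q)) \<partial>M) = \<infinity>"
proof -
  interpret prob_space M by fact
  have Gm: "G \<in> borel_measurable M" using Gd unfolding distributed_def by auto
  have Sne: "S \<noteq> {}" using SZ by (auto intro: Nat.gr0I)
  then have R: "R \<ge> 0" using SR by auto
  have SRabs: "\<And>x. x \<in> S \<Longrightarrow> \<bar>x\<bar> \<le> R" using SR by (force simp: abs_le_iff subset_iff)
  define c0 where "c0 = R + R^3 * u"
  have c0: "c0 \<ge> 0" unfolding c0_def using R u by auto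
  define \<pi> where "\<pi> = measure M {\<omega>\<in>space M. Z \<omega> \<in> S}"
  have Zs: "{\<omega>\<in>space M. Z \<omega> \<in> S} \<in> sets M" using Zm Sb by measurable
  have \<pi>e: "emeasure M {\<omega>\<in>space M. Z \<omega> \<in> S} = ennreal \<pi>" unfolding \<pi>_def using emeasure_eq_measure by blast
  have \<pi>: "\<pi> > 0" using SZ \<pi>e by (simp add: ennreal_less_zero_iff)
  have key: "ennreal (exp (p * (r - c0) powr q) * normal_density 0 \<sigma> (r + 1) * \<pi>)
      \<le> (\<integral>\<^sup>+\<omega>. ennreal (exp (p * \<bar>Yv \<omega>\<bar> powr q)) \<partial>M)" if r: "r > c0" for r
  proof -
    define e where "e = exp (p * (r - c0) powr q)"
    define E where "E = {\<omega>\<in>space M. Z \<omega> \<in> S \<and> G \<omega> \<in> {r..r+1}}"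
    have Em: "E \<in> sets M" unfolding E_def using Zm Gm Sb by measurable
    have pw: "ennreal e * indicator E \<omega> \<le> ennreal (exp (p * \<bar>Yv \<omega>\<bar> powr q))" if w: "\<omega> \<in> space M" for \<omega>
    proof (cases "\<omega> \<in> E")
      case True
      then have ZS: "Z \<omega> \<in> S" and Gr: "G \<omega> \<ge> r" unfolding E_def by auto
      have zR: "\<bar>Z \<omega>\<bar> \<le> R" using SRabs ZS by auto
      have "\<bar>Z \<omega>\<bar>^3 \<le> R^3" using zR by (intro power_mono) auto
      then have "\<bar>Z \<omega> ^ 3 * u\<bar> \<le> R^3 * u" using u by (simp add: abs_mult power_abs mult_right_mono)
      then have "Yv \<omega> \<ge> r - c0" using Yeq[OF w ZS] zR Gr unfolding c0_def by linarith
      then have "\<bar>Yv \<omega>\<bar> \<ge> r - c0" by linarith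
      then have "(r - c0) powr q \<le> \<bar>Yv \<omega>\<bar> powr q" using r q by (intro powr_mono2) auto
      then have "e \<le> exp (p * \<bar>Yv \<omega>\<bar> powr q)" unfolding e_def using p by auto
      then show ?thesis using True by (auto intro: ennreal_leI)
    qed simp
    have "(\<integral>\<^sup>+\<omega>. ennreal e * indicator E \<omega> \<partial>M) \<le> (\<integral>\<^sup>+\<omega>. ennreal (exp (p * \<bar>Yv \<omega>\<bar> powr q)) \<partial>M)"
      by (intro nn_integral_mono pw)
    moreover have "(\<integral>\<^sup>+\<omega>. ennreal e * indicator E \<omega> \<partial>M) = ennreal e * emeasure M E"
      using Em by (rule nn_integral_cmult_indicator)
    moreover have "emeasure M E = ennreal \<pi> * emeasure M {\<omega>\<in>space M. G \<omega> \<in> {r..r+1}}"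
      unfolding E_def using ind[OF Sb, of "{r..r+1}"] \<pi>e by simp
    moreover have "ennreal (normal_density 0 \<sigma> (r + 1)) \<le> emeasure M {\<omega>\<in>space M. G \<omega> \<in> {r..r+1}}"
    proof -
      have "emeasure M {\<omega>\<in>space M. G \<omega> \<in> {r..r+1}} = emeasure (distr M lborel G) {r..r+1}"
        using Gm by (subst emeasure_distr) (auto intro!: arg_cong[where f="emeasure M"])
      also have "\<dots> = emeasure (density lborel (\<lambda>x. ennreal (normal_density 0 \<sigma> x))) {r..r+1}"
        using Gd unfolding distributed_def by simp
      also have "\<dots> = (\<integral>\<^sup>+x. ennreal (normal_density 0 \<sigma> x) * indicator {r..r+1} x \<partial>lborel)"
        by (subst emeasure_density) auto
      finally have eq: "emeasure M {\<omega>\<in>space M. G \<omega> \<in> {r..r+1}} = (\<integral>\<^sup>+x. ennreal (normal_density 0 \<sigma> x) * indicator {r..r+1} x \<partial>lborel)" .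
      have "ennreal (normal_density 0 \<sigma> (r + 1)) * indicator {r..r+1} x \<le> ennreal (normal_density 0 \<sigma> x) * indicator {r..r+1} x" for x
      proof (cases "x \<in> {r..r+1}")
        case True
        then have "\<bar>x\<bar> \<le> r + 1" using r c0 by auto
        then show ?thesis using nd_lower[OF \<sigma>] True by (auto intro!: ennreal_leI)
      qed simp
      then have "(\<integral>\<^sup>+x. ennreal (normal_density 0 \<sigma> (r + 1)) * indicator {r..r+1} x \<partial>lborel) \<le> emeasure M {\<omega>\<in>space M. G \<omega> \<in> {r..r+1}}"
        unfolding eq by (intro nn_integral_mono) auto
      moreover have "(\<integral>\<^sup>+x. ennreal (normal_density 0 \<sigma> (r + 1)) * indicator {r..r+1} x \<partial>lborel) = ennreal (normal_density 0 \<sigma> (r + 1))"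
        by (subst nn_integral_cmult_indicator) auto
      ultimately show ?thesis by simp
    qed
    ultimately have "ennreal e * (ennreal \<pi> * ennreal (normal_density 0 \<sigma> (r + 1))) \<le> (\<integral>\<^sup>+\<omega>. ennreal (exp (p * \<bar>Yv \<omega>\<bar> powr q)) \<partial>M)"
      by (metis (no_types, lifting) mult_left_mono order_trans zero_le)
    moreover have "ennreal e * (ennreal \<pi> * ennreal (normal_density 0 \<sigma> (r + 1))) = ennreal (e * normal_density 0 \<sigma> (r + 1) * \<pi>)"
    proof -
      have e0: "e \<ge> 0" unfolding e_def by simp
      have n0: "normal_density 0 \<sigma> (r + 1) \<ge> 0" by simp
      have "ennreal e * (ennreal \<pi> * ennreal (normal_density 0 \<sigma> (r + 1))) = ennreal (e * (\<pi> * normal_density 0 \<sigma> (r + 1)))"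
        using e0 n0 \<pi> by (simp add: ennreal_mult)
      then show ?thesis by (simp add: mult_ac)
    qed
    ultimately show ?thesis unfolding e_def by simp
  qed
  show ?thesis
  proof (rule ccontr)
    assume "(\<integral>\<^sup>+\<omega>. ennreal (exp (p * \<bar>Yv \<omega>\<bar> powr q)) \<partial>M) \<noteq> \<infinity>"
    then obtain y where y: "(\<integral>\<^sup>+\<omega>. ennreal (exp (p * \<bar>Yv \<omega>\<bar> powr q)) \<partial>M) = ennreal y" "y \<ge> 0"
      by (cases "(\<integral>\<^sup>+\<omega>. ennreal (exp (p * \<bar>Yv \<omega>\<bar> powr q)) \<partial>M)") auto
    have Kp: "(y + 1) / \<pi> > 0" using y \<pi> by auto
    obtain r where r: "r > c0" "(y + 1) / \<pi> \<le> exp (p * (r - c0) powr q) * normal_density 0 \<sigma> (r + 1)"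
      using growth[OF p q \<sigma> c0 Kp] by blast
    have "y + 1 \<le> exp (p * (r - c0) powr q) * normal_density 0 \<sigma> (r + 1) * \<pi>"
      using r(2) \<pi> by (simp add: divide_le_eq)
    moreover have "exp (p * (r - c0) powr q) * normal_density 0 \<sigma> (r + 1) * \<pi> \<le> y"
      using key[OF r(1)] y by (simp add: ennreal_le_iff)
    ultimately show False by linarith
  qed
qed




theorem lemma5p1:
  fixes P :: "'a measure" and F :: "real \<Rightarrow> 'a measure" and T :: real
    and W X :: "real \<Rightarrow> 'a \<Rightarrow> real" and \<epsilon> :: real
    and D :: "real \<Rightarrow> real set" and Y :: "nat \<Rightarrow> real \<Rightarrow> 'a \<Rightarrow> real"
  assumes T_pos: "0 < T"
    and basis: "stochastic_basis P F T"
    and BM: "std_brownian_motion P F T W"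
    and X_adapted: "\<forall>t\<in>{0..T}. X t \<in> borel_measurable (F t)"
    and X_cont: "\<forall>\<omega>\<in>space P. continuous_on {0..T} (\<lambda>t. X t \<omega>)"
    and X_eq: "\<forall>t\<in>{0..T}. AE \<omega> in P.
                 X t \<omega> = X 0 \<omega> - integral {0..t} (\<lambda>s. (X s \<omega>) ^ 3) + W t \<omega>"
    and eps: "0 < \<epsilon>" "\<epsilon> \<le> 1/2"
    and X0_exp: "(\<integral>\<^sup>+ \<omega>. ennreal (exp (\<epsilon> * \<bar>X 0 \<omega>\<bar> ^ 4)) \<partial>P) < \<infinity>"
    and D_borel: "\<forall>t\<in>{0<..T}. D t \<in> sets borel"
    and D_mono: "\<forall>t1 t2. 0 < t1 \<and> t1 \<le> t2 \<and> t2 \<le> T \<longrightarrow> D t2 \<subseteq> D t1"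
    and D_pos: "emeasure lborel (D T) * emeasure P {\<omega>\<in>space P. X 0 \<omega> \<in> D T} > 0"
    and D_cover: "(\<Union>t\<in>{0<..T}. interior (D t)) = UNIV"
    and Y_0: "\<forall>N\<ge>1. \<forall>\<omega>\<in>space P. Y N 0 \<omega> = X 0 \<omega>"
    and Y_step: "\<forall>N\<ge>1. \<forall>n<N. \<forall>t\<in>{real n * T / real N .. real (n + 1) * T / real N}.
                  \<forall>\<omega>\<in>space P.
                   Y N t \<omega> = Y N (real n * T / real N) \<omega>
                     + indicator (D (T / real N)) (Y N (real n * T / real N) \<omega>)
                       * (W t \<omega> - W (real n * T / real N) \<omega>
                          - (Y N (real n * T / real N) \<omega>) ^ 3 * (t - real n * T / real N))"
  shows "\<forall>t\<in>{0<..T}. \<forall>N\<ge>1. \<forall>p>0. \<forall>q>2.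
           ((\<lambda>K. measure P {\<omega>\<in>space P. (SUP s\<in>{0..T}. \<bar>X s \<omega> - Y K s \<omega>\<bar>) > p})
              \<longlonglongrightarrow> 0)
           \<and> (\<integral>\<^sup>+ \<omega>. ennreal (exp (p * \<bar>Y N t \<omega>\<bar> powr q)) \<partial>P) = \<infinity>"
proof -
  have prob: "prob_space P" using basis unfolding stochastic_basis_def by auto
  interpret prob_space P by (rule prob)
  have subF: "\<And>t. t \<in> {0..T} \<Longrightarrow> subalgebra P (F t)" using basis unfolding stochastic_basis_def by auto
  have spF: "\<And>t. t \<in> {0..T} \<Longrightarrow> space (F t) = space P" using subF unfolding subalgebra_def by auto
  have monoF: "\<And>s t. 0 \<le> s \<Longrightarrow> s \<le> t \<Longrightarrow> t \<le> T \<Longrightarrow> sets (F s) \<subseteq> sets (F t)"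
    using basis unfolding stochastic_basis_def by auto
  have transF: "f \<in> borel_measurable (F t)" if "0 \<le> s" "s \<le> t" "t \<le> T" "f \<in> borel_measurable (F s)" for s t f
  proof (rule measurable_from_subalg[OF _ that(4)])
    show "subalgebra (F t) (F s)" unfolding subalgebra_def using monoF[OF that(1-3)] spF[of s] spF[of t] that by auto
  qed
  have toP: "f \<in> borel_measurable P" if "t \<in> {0..T}" "f \<in> borel_measurable (F t)" for t f
    using measurable_from_subalg[OF subF[OF that(1)] that(2)] .
  have Wm: "\<And>t. t \<in> {0..T} \<Longrightarrow> W t \<in> borel_measurable (F t)" using BM unfolding std_brownian_motion_def by auto
  have Wc: "\<And>\<omega>. \<omega> \<in> space P \<Longrightarrow> continuous_on {0..T} (\<lambda>t. W t \<omega>)" using BM unfolding std_brownian_motion_def by auto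
  have Winc: "\<And>s t. 0 \<le> s \<Longrightarrow> s < t \<Longrightarrow> t \<le> T \<Longrightarrow>
        distributed P lborel (\<lambda>\<omega>. W t \<omega> - W s \<omega>) (normal_density 0 (sqrt (t - s))) \<and>
        (\<forall>A\<in>sets (F s). \<forall>B\<in>sets borel.
           measure P (A \<inter> {\<omega>\<in>space P. W t \<omega> - W s \<omega> \<in> B})
             = measure P A * measure P {\<omega>\<in>space P. W t \<omega> - W s \<omega> \<in> B})"
    using BM unfolding std_brownian_motion_def by blast
  have Dm: "\<And>t1 t2. 0 < t1 \<Longrightarrow> t1 \<le> t2 \<Longrightarrow> t2 \<le> T \<Longrightarrow> D t2 \<subseteq> D t1" using D_mono by blast
  define tg where "tg N n = real n * T / real N" for N n :: nat
  have tgin: "tg N n \<in> {0..T}" if "N \<ge> 1" "n \<le> N" for N n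
  proof -
    have "real n * T \<le> real N * T" using that T_pos by (intro mult_right_mono) auto
    then show ?thesis unfolding tg_def using that T_pos by (auto simp: divide_le_eq)
  qed
  have tgle: "tg N n \<le> tg N (n+1)" "tg N (n+1) - tg N n = T / real N" for N n
    unfolding tg_def using T_pos by (auto simp: divide_right_mono algebra_simps add_divide_distrib)
  have tglt: "tg N n < tg N (n+1)" if "N \<ge> 1" for N n
  proof -
    have "0 < T / real N" using that T_pos by simp
    then show ?thesis using tgle(2)[of N n] by linarith
  qed
  have Ystep: "\<And>N n t \<omega>. N \<ge> 1 \<Longrightarrow> n < N \<Longrightarrow> t \<in> {tg N n .. tg N (n+1)} \<Longrightarrow> \<omega> \<in> space P \<Longrightarrow>
      Y N t \<omega> = Y N (tg N n) \<omega> + indicator (D (T / real N)) (Y N (tg N n) \<omega>)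
        * (W t \<omega> - W (tg N n) \<omega> - (Y N (tg N n) \<omega>) ^ 3 * (t - tg N n))"
    using Y_step unfolding tg_def by blast
  have DhB: "D (T / real N) \<in> sets borel" if "N \<ge> 1" for N
    using D_borel T_pos that by (auto simp: divide_le_eq)
  have Ymeas: "Y N (tg N k) \<in> borel_measurable (F (tg N k))" if N: "N \<ge> 1" and "k \<le> N" for N k
    using that(2)
  proof (induction k)
    case 0
    have "Y N (tg N 0) \<in> borel_measurable (F 0) \<longleftrightarrow> X 0 \<in> borel_measurable (F 0)"
      using Y_0 N spF[of 0] T_pos by (intro measurable_cong) (auto simp: tg_def)
    then show ?case using X_adapted T_pos by (auto simp: tg_def)
  next
    case (Suc k)
    then have k: "k < N" "k \<le> N" by auto
    have t1: "tg N (Suc k) \<in> {0..T}" using tgin[OF N Suc.prems] .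
    have t0: "tg N k \<in> {0..T}" using tgin[OF N k(2)] .
    have le: "tg N k \<le> tg N (Suc k)" using tgle(1)[of N k] by simp
    have Yk: "Y N (tg N k) \<in> borel_measurable (F (tg N (Suc k)))"
      using transF[OF _ le _ Suc.IH[OF k(2)]] t0 t1 by auto
    have Wk: "W (tg N k) \<in> borel_measurable (F (tg N (Suc k)))"
      using transF[OF _ le _ Wm[OF t0]] t0 t1 by auto
    have Wk1: "W (tg N (Suc k)) \<in> borel_measurable (F (tg N (Suc k)))" using Wm[OF t1] .
    note [measurable] = Yk Wk Wk1 DhB[OF N]
    have "(\<lambda>\<omega>. Y N (tg N k) \<omega> + indicator (D (T / real N)) (Y N (tg N k) \<omega>)
        * (W (tg N (Suc k)) \<omega> - W (tg N k) \<omega> - (Y N (tg N k) \<omega>) ^ 3 * (tg N (Suc k) - tg N k)))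
        \<in> borel_measurable (F (tg N (Suc k)))" by measurable
    moreover have "\<omega> \<in> space (F (tg N (Suc k))) \<Longrightarrow> Y N (tg N (Suc k)) \<omega> = Y N (tg N k) \<omega> + indicator (D (T / real N)) (Y N (tg N k) \<omega>)
        * (W (tg N (Suc k)) \<omega> - W (tg N k) \<omega> - (Y N (tg N k) \<omega>) ^ 3 * (tg N (Suc k) - tg N k))" for \<omega>
      using Ystep[OF N k(1), of "tg N (Suc k)" \<omega>] spF[OF t1] le by auto
    ultimately show ?case using measurable_cong by (smt (verit, best))
  qed
  have Ymeas2: "Y N t \<in> borel_measurable (F t)" if N: "N \<ge> 1" and t: "t \<in> {0..T}" for N t
  proof -
    obtain n where n: "n < N" "t \<in> {tg N n .. tg N (n+1)}" using grid_cover[OF T_pos N t] unfolding tg_def by blast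
    have t0: "tg N n \<in> {0..T}" using tgin[OF N] n by auto
    have Yk: "Y N (tg N n) \<in> borel_measurable (F t)"
      using transF[OF _ _ _ Ymeas[OF N, of n]] n t0 t by auto
    have Wk: "W (tg N n) \<in> borel_measurable (F t)"
      using transF[OF _ _ _ Wm[OF t0]] n t0 t by auto
    have Wt: "W t \<in> borel_measurable (F t)" using Wm[OF t] .
    note [measurable] = Yk Wk Wt DhB[OF N]
    have "(\<lambda>\<omega>. Y N (tg N n) \<omega> + indicator (D (T / real N)) (Y N (tg N n) \<omega>)
        * (W t \<omega> - W (tg N n) \<omega> - (Y N (tg N n) \<omega>) ^ 3 * (t - tg N n)))
        \<in> borel_measurable (F t)" by measurable
    moreover have "\<omega> \<in> space (F t) \<Longrightarrow> Y N t \<omega> = Y N (tg N n) \<omega> + indicator (D (T / real N)) (Y N (tg N n) \<omega>)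
        * (W t \<omega> - W (tg N n) \<omega> - (Y N (tg N n) \<omega>) ^ 3 * (t - tg N n))" for \<omega>
      using Ystep[OF N n(1) n(2), of \<omega>] spF[OF t] by auto
    ultimately show ?thesis using measurable_cong by (smt (verit, best))
  qed
  have part1: "(\<lambda>K. measure P {\<omega>\<in>space P. (SUP s\<in>{0..T}. \<bar>X s \<omega> - Y K s \<omega>\<bar>) > p}) \<longlonglongrightarrow> 0"
    if p: "p > 0" for p
  proof -
    define A where "A K = {\<omega>\<in>space P. (SUP s\<in>{0..T}. \<bar>X s \<omega> - Y K s \<omega>\<bar>) > p}" for K
    have Xm: "\<And>s. s \<in> {0..T} \<Longrightarrow> X s \<in> borel_measurable P" using X_adapted toP by blast
    have Ycont: "continuous_on {0..T} (\<lambda>s. Y K s \<omega>)" if K: "K \<ge> 1" and w: "\<omega> \<in> space P" for K \<omega>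
    proof -
      have cov: "{0..T} = (\<Union>n\<in>{..<K}. {tg K n..tg K (n+1)})"
      proof
        show "{0..T} \<subseteq> (\<Union>n\<in>{..<K}. {tg K n..tg K (n+1)})"
        proof
          fix s assume "s \<in> {0..T}"
          then obtain n where "n < K" "s \<in> {tg K n..tg K (n+1)}" using grid_cover[OF T_pos K] unfolding tg_def by blast
          then show "s \<in> (\<Union>n\<in>{..<K}. {tg K n..tg K (n+1)})" by auto
        qed
        show "(\<Union>n\<in>{..<K}. {tg K n..tg K (n+1)}) \<subseteq> {0..T}"
        proof (intro UN_least subsetI)
          fix n s assume n: "n \<in> {..<K}" and s: "s \<in> {tg K n..tg K (n+1)}"
          have "tg K n \<in> {0..T}" "tg K (n+1) \<in> {0..T}" using tgin[OF K, of n] tgin[OF K, of "n+1"] n by auto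
          then show "s \<in> {0..T}" using s by auto
        qed
      qed
      have "continuous_on (\<Union>n\<in>{..<K}. {tg K n..tg K (n+1)}) (\<lambda>s. Y K s \<omega>)"
      proof (rule continuous_on_closed_Union)
        fix n assume n: "n \<in> {..<K}"
        have sub: "{tg K n..tg K (n+1)} \<subseteq> {0..T}" using tgin[OF K, of n] tgin[OF K, of "n+1"] n by auto
        define a0 where "a0 = Y K (tg K n) \<omega>"
        define a1 :: real where "a1 = indicator (D (T / real K)) (Y K (tg K n) \<omega>)"
        define a2 where "a2 = W (tg K n) \<omega>"
        define a3 where "a3 = (Y K (tg K n) \<omega>) ^ 3"
        define a4 where "a4 = tg K n"
        have cW: "continuous_on {tg K n..tg K (n+1)} (\<lambda>s. W s \<omega>)" using continuous_on_subset[OF Wc[OF w] sub] .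
        have "continuous_on {tg K n..tg K (n+1)} (\<lambda>s. a0 + a1 * (W s \<omega> - a2 - a3 * (s - a4)))"
          by (intro continuous_on_add continuous_on_const continuous_on_mult continuous_on_diff cW continuous_on_id)
        then have "continuous_on {tg K n..tg K (n+1)} (\<lambda>s. Y K (tg K n) \<omega> + indicator (D (T / real K)) (Y K (tg K n) \<omega>)
          * (W s \<omega> - W (tg K n) \<omega> - (Y K (tg K n) \<omega>) ^ 3 * (s - tg K n)))"
          unfolding a0_def a1_def a2_def a3_def a4_def .
        then show "continuous_on {tg K n..tg K (n+1)} (\<lambda>s. Y K s \<omega>)"
        proof (rule continuous_on_eq)
          fix s assume s: "s \<in> {tg K n..tg K (n+1)}"
          have nK: "n < K" using n by simp
          show "Y K (tg K n) \<omega> + indicator (D (T / real K)) (Y K (tg K n) \<omega>)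
            * (W s \<omega> - W (tg K n) \<omega> - (Y K (tg K n) \<omega>) ^ 3 * (s - tg K n)) = Y K s \<omega>"
            using Ystep[OF K nK s w] by simp
        qed
      qed (simp_all add: closed_atLeastAtMost)
      then show ?thesis using cov by simp
    qed
    have Am: "A K \<in> sets P" if K: "K \<ge> 1" for K
    proof -
      have "A K = {\<omega>\<in>space P. \<exists>r\<in>\<rat> \<inter> {0..T}. \<bar>X r \<omega> - Y K r \<omega>\<bar> > p}"
      proof -
        have "(SUP s\<in>{0..T}. \<bar>X s \<omega> - Y K s \<omega>\<bar>) > p \<longleftrightarrow> (\<exists>r\<in>\<rat> \<inter> {0..T}. \<bar>X r \<omega> - Y K r \<omega>\<bar> > p)"
          if w: "\<omega> \<in> space P" for \<omega>
          using X_cont w Ycont[OF K w] by (intro sup_gt_rat[OF T_pos]) (auto intro!: continuous_intros)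
        then show ?thesis unfolding A_def by auto
      qed
      also have "\<dots> \<in> sets P"
      proof (rule sets.sets_Collect_countable_Ex')
        fix r assume r: "r \<in> \<rat> \<inter> {0..T}"
        have [measurable]: "X r \<in> borel_measurable P" using Xm r by auto
        have [measurable]: "Y K r \<in> borel_measurable P" using toP[OF _ Ymeas2[OF K]] r by auto
        show "{\<omega>\<in>space P. \<bar>X r \<omega> - Y K r \<omega>\<bar> > p} \<in> sets P" by measurable
      qed (auto intro: countable_rat)
      finally show ?thesis .
    qed
    have aux: "AE \<omega> in P. (1 \<le> N \<longrightarrow> n \<le> N \<longrightarrow> X (tg N n) \<omega> = X 0 \<omega> - integral {0..tg N n} (\<lambda>s. (X s \<omega>) ^ 3) + W (tg N n) \<omega>)" for N n :: nat
    proof (cases "1 \<le> N \<and> n \<le> N")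
      case True
      then have "AE \<omega> in P. X (tg N n) \<omega> = X 0 \<omega> - integral {0..tg N n} (\<lambda>s. (X s \<omega>) ^ 3) + W (tg N n) \<omega>"
        using X_eq tgin[of N n] by auto
      then show ?thesis by (rule eventually_mono) auto
    qed auto
    have good: "AE \<omega> in P. \<forall>N n. 1 \<le> N \<longrightarrow> n \<le> N \<longrightarrow> X (tg N n) \<omega> = X 0 \<omega> - integral {0..tg N n} (\<lambda>s. (X s \<omega>) ^ 3) + W (tg N n) \<omega>"
      unfolding AE_all_countable using aux by blast
    have ev1: "eventually (\<lambda>K. \<omega> \<notin> A K) sequentially"
      if w: "\<omega> \<in> space P" and g: "\<forall>N n. 1 \<le> N \<longrightarrow> n \<le> N \<longrightarrow> X (tg N n) \<omega> = X 0 \<omega> - integral {0..tg N n} (\<lambda>s. (X s \<omega>) ^ 3) + W (tg N n) \<omega>" for \<omega>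
    proof -
      have xc: "continuous_on {0..T} (\<lambda>s. X s \<omega>)" using X_cont w by auto
      have "eventually (\<lambda>K. \<forall>s\<in>{0..T}. \<bar>X s \<omega> - Y K s \<omega>\<bar> \<le> p/2) sequentially"
      proof (rule euler_det[where x="\<lambda>s. X s \<omega>" and w="\<lambda>s. W s \<omega>" and y="\<lambda>K s. Y K s \<omega>" and D=D and T=T])
        show "0 < T" by (rule T_pos)
        show "continuous_on {0..T} (\<lambda>s. X s \<omega>)" by (rule xc)
        show "continuous_on {0..T} (\<lambda>s. W s \<omega>)" using Wc w by auto
        show "\<And>t1 t2. 0 < t1 \<Longrightarrow> t1 \<le> t2 \<Longrightarrow> t2 \<le> T \<Longrightarrow> D t2 \<subseteq> D t1" by (rule Dm)
        show "(\<Union>t\<in>{0<..T}. interior (D t)) = UNIV" by (rule D_cover)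
        show "\<And>N. N \<ge> 1 \<Longrightarrow> Y N 0 \<omega> = X 0 \<omega>" using Y_0 w by auto
        show "0 < p/2" using p by auto
        show "\<And>N n t. N \<ge> 1 \<Longrightarrow> n < N \<Longrightarrow> t \<in> {real n*T/real N..real (n+1)*T/real N} \<Longrightarrow>
           Y N t \<omega> = Y N (real n*T/real N) \<omega> + indicator (D (T/real N)) (Y N (real n*T/real N) \<omega>)
             * (W t \<omega> - W (real n*T/real N) \<omega> - (Y N (real n*T/real N) \<omega>)^3 * (t - real n*T/real N))"
          using Y_step w by blast
        fix N n :: nat assume N: "N \<ge> 1" and n: "n < N"
        have g1: "X (tg N (n+1)) \<omega> = X 0 \<omega> - integral {0..tg N (n+1)} (\<lambda>s. (X s \<omega>) ^ 3) + W (tg N (n+1)) \<omega>"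
          using g N n by auto
        have g0: "X (tg N n) \<omega> = X 0 \<omega> - integral {0..tg N n} (\<lambda>s. (X s \<omega>) ^ 3) + W (tg N n) \<omega>"
          using g N n by auto
        have sub: "{0..tg N (n+1)} \<subseteq> {0..T}" using tgin[OF N, of "n+1"] n by auto
        have int: "(\<lambda>s. (X s \<omega>) ^ 3) integrable_on {0..tg N (n+1)}"
          using continuous_on_subset[OF xc sub] by (intro integrable_continuous_real continuous_intros)
        have comb: "integral {0..tg N n} (\<lambda>s. (X s \<omega>) ^ 3) + integral {tg N n..tg N (n+1)} (\<lambda>s. (X s \<omega>) ^ 3)
            = integral {0..tg N (n+1)} (\<lambda>s. (X s \<omega>) ^ 3)"
          using tgin[OF N, of n] n tgle(1)[of N n] by (intro Henstock_Kurzweil_Integration.integral_combine[OF _ _ int]) auto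
        show "X (real (n+1)*T/real N) \<omega> = X (real n*T/real N) \<omega>
           - integral {real n*T/real N..real (n+1)*T/real N} (\<lambda>s. X s \<omega> ^ 3)
           + (W (real (n+1)*T/real N) \<omega> - W (real n*T/real N) \<omega>)"
          using g0 g1 comb unfolding tg_def by linarith
      qed
      then show ?thesis
      proof (rule eventually_mono)
        fix K assume "\<forall>s\<in>{0..T}. \<bar>X s \<omega> - Y K s \<omega>\<bar> \<le> p/2"
        then have "(SUP s\<in>{0..T}. \<bar>X s \<omega> - Y K s \<omega>\<bar>) \<le> p/2" using T_pos by (intro cSUP_least) auto
        then show "\<omega> \<notin> A K" unfolding A_def using p by auto
      qed
    qed
    have ev: "AE \<omega> in P. eventually (\<lambda>K. \<omega> \<notin> A (Suc K)) sequentially"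
    proof (rule AE_mp[OF good AE_I2], intro impI)
      fix \<omega> assume w: "\<omega> \<in> space P"
        and g: "\<forall>N n. 1 \<le> N \<longrightarrow> n \<le> N \<longrightarrow> X (tg N n) \<omega> = X 0 \<omega> - integral {0..tg N n} (\<lambda>s. (X s \<omega>) ^ 3) + W (tg N n) \<omega>"
      show "eventually (\<lambda>K. \<omega> \<notin> A (Suc K)) sequentially"
        using ev1[OF w g] eventually_sequentially_Suc[of "\<lambda>K. \<omega> \<notin> A K"] by blast
    qed
    have "(\<lambda>K. measure P (A (Suc K))) \<longlonglongrightarrow> 0"
      by (rule ae_eventually_measure_tendsto[OF prob _ ev]) (use Am in auto)
    then show ?thesis unfolding A_def[symmetric]
      using filterlim_sequentially_Suc[of "\<lambda>K. measure P (A K)" "nhds 0"] by simp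
  qed
  have indW: "emeasure P {\<omega>\<in>space P. Z \<omega> \<in> A \<and> W t' \<omega> - W s \<omega> \<in> B}
      = emeasure P {\<omega>\<in>space P. Z \<omega> \<in> A} * emeasure P {\<omega>\<in>space P. W t' \<omega> - W s \<omega> \<in> B}"
    if st: "0 \<le> s" "s < t'" "t' \<le> T" and Zm: "Z \<in> borel_measurable (F s)"
      and AB: "A \<in> sets borel" "B \<in> sets borel" for s t' Z A B
  proof -
    have s0: "s \<in> {0..T}" using st by auto
    have "{\<omega>\<in>space (F s). Z \<omega> \<in> A} \<in> sets (F s)" using Zm AB by measurable
    then have A': "{\<omega>\<in>space P. Z \<omega> \<in> A} \<in> sets (F s)" using spF[OF s0] by simp
    have t0: "t' \<in> {0..T}" using st by auto
    have Gm: "(\<lambda>\<omega>. W t' \<omega> - W s \<omega>) \<in> borel_measurable P"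
      using toP[OF t0 Wm[OF t0]] toP[OF s0 Wm[OF s0]] by measurable
    have Zm': "Z \<in> borel_measurable P" using toP[OF s0 Zm] .
    have eq: "measure P ({\<omega>\<in>space P. Z \<omega> \<in> A} \<inter> {\<omega>\<in>space P. W t' \<omega> - W s \<omega> \<in> B})
       = measure P {\<omega>\<in>space P. Z \<omega> \<in> A} * measure P {\<omega>\<in>space P. W t' \<omega> - W s \<omega> \<in> B}"
      using Winc[OF st] A' AB by blast
    have "{\<omega>\<in>space P. Z \<omega> \<in> A \<and> W t' \<omega> - W s \<omega> \<in> B}
       = {\<omega>\<in>space P. Z \<omega> \<in> A} \<inter> {\<omega>\<in>space P. W t' \<omega> - W s \<omega> \<in> B}" by auto
    then show ?thesis using eq by (simp add: emeasure_eq_measure ennreal_mult)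
  qed
  have part2: "(\<integral>\<^sup>+ \<omega>. ennreal (exp (p * \<bar>Y N t \<omega>\<bar> powr q)) \<partial>P) = \<infinity>"
    if t: "t \<in> {0<..T}" and N: "N \<ge> 1" and p: "p > 0" and q: "q > 2" for t N p q
  proof -
    define h where "h = T / real N"
    have hpos: "h > 0" and hT: "h \<le> T" unfolding h_def using T_pos N by (auto simp: divide_le_eq)
    have DTsub: "D T \<subseteq> D h" using Dm[OF hpos hT] by simp
    have DTb: "D T \<in> sets borel" using D_borel T_pos by auto
    have X0m: "X 0 \<in> borel_measurable P" using X_adapted T_pos by (intro toP[of 0]) auto
    have pos1: "emeasure lborel (D T) > 0" and pos2: "emeasure P {\<omega>\<in>space P. X 0 \<omega> \<in> D T} > 0"
      using D_pos by (auto simp: ennreal_zero_less_mult_iff)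
    define Sn where "Sn n = D T \<inter> {- real n..real n}" for n :: nat
    have Snb: "Sn n \<in> sets borel" for n unfolding Sn_def using DTb by auto
    have Sninc: "incseq Sn" unfolding Sn_def incseq_def by auto
    have Snun: "(\<Union>n. Sn n) = D T"
    proof
      show "(\<Union>n. Sn n) \<subseteq> D T" unfolding Sn_def by auto
      show "D T \<subseteq> (\<Union>n. Sn n)"
      proof
        fix x assume x: "x \<in> D T"
        obtain n :: nat where "\<bar>x\<bar> \<le> real n" using real_arch_simple by blast
        then have "x \<in> Sn n" using x unfolding Sn_def by (auto simp: abs_le_iff)
        then show "x \<in> (\<Union>n. Sn n)" by blast
      qed
    qed
    obtain n1 where n1: "emeasure lborel (Sn n1) > 0"
    proof (rule ccontr)
      assume "\<not> thesis"
      then have "\<And>n. emeasure lborel (Sn n) = 0" using that by (meson gr_zeroI)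
      then have "(SUP n. emeasure lborel (Sn n)) = 0" by simp
      moreover have "(SUP n. emeasure lborel (Sn n)) = emeasure lborel (\<Union>n. Sn n)"
        using Snb Sninc by (intro SUP_emeasure_incseq) auto
      ultimately show False using pos1 Snun by simp
    qed
    define Pn where "Pn n = {\<omega>\<in>space P. X 0 \<omega> \<in> Sn n}" for n
    have Pnm: "Pn n \<in> sets P" for n unfolding Pn_def using X0m Snb[of n] by measurable
    have Pninc: "incseq Pn" unfolding Pn_def using Sninc by (auto simp: incseq_def)
    have Pnun: "(\<Union>n. Pn n) = {\<omega>\<in>space P. X 0 \<omega> \<in> D T}" unfolding Pn_def using Snun by auto
    obtain n2 where n2: "emeasure P (Pn n2) > 0"
    proof (rule ccontr)
      assume "\<not> thesis"
      then have "\<And>n. emeasure P (Pn n) = 0" using that by (meson gr_zeroI)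
      then have "(SUP n. emeasure P (Pn n)) = 0" by simp
      moreover have "(SUP n. emeasure P (Pn n)) = emeasure P (\<Union>n. Pn n)"
        using Pnm Pninc by (intro SUP_emeasure_incseq) auto
      ultimately show False using pos2 Pnun by simp
    qed
    define R0 where "R0 = max n1 n2"
    define S where "S = Sn R0"
    have Sb: "S \<in> sets borel" unfolding S_def by (rule Snb)
    have SR: "S \<subseteq> {- real R0..real R0}" unfolding S_def Sn_def by auto
    have SDh: "S \<subseteq> D h" unfolding S_def Sn_def using DTsub by auto
    have Sl: "emeasure lborel S > 0"
    proof -
      have "emeasure lborel (Sn n1) \<le> emeasure lborel S" unfolding S_def
        using Snb Sninc by (intro emeasure_mono) (auto simp: incseq_def R0_def)
      then show ?thesis using n1 by simp
    qed
    have SX: "emeasure P {\<omega>\<in>space P. X 0 \<omega> \<in> S} > 0"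
    proof -
      have "emeasure P (Pn n2) \<le> emeasure P (Pn R0)"
        using Pnm Pninc by (intro emeasure_mono) (auto simp: incseq_def R0_def)
      then show ?thesis using n2 unfolding Pn_def S_def by simp
    qed
    have stepk: "emeasure P {\<omega>\<in>space P. Y N (tg N k) \<omega> \<in> S} > 0" if "k \<le> N" for k
      using that
    proof (induction k)
      case 0
      have "{\<omega>\<in>space P. Y N (tg N 0) \<omega> \<in> S} = {\<omega>\<in>space P. X 0 \<omega> \<in> S}"
        using Y_0 N by (auto simp: tg_def)
      then show ?case using SX by simp
    next
      case (Suc k)
      then have k: "k < N" "k \<le> N" by auto
      define Z where "Z = Y N (tg N k)"
      define G where "G = (\<lambda>\<omega>. W (tg N (Suc k)) \<omega> - W (tg N k) \<omega>)"
      have t0: "tg N k \<in> {0..T}" using tgin[OF N k(2)] .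
      have t1: "tg N (Suc k) \<in> {0..T}" using tgin[OF N Suc.prems] .
      have lt: "tg N k < tg N (Suc k)" using tglt[OF N, of k] by simp
      have hk: "tg N (Suc k) - tg N k = h" using tgle(2)[of N k] unfolding h_def by simp
      have ZmF: "Z \<in> borel_measurable (F (tg N k))" unfolding Z_def using Ymeas[OF N k(2)] .
      have Zm: "Z \<in> borel_measurable P" using toP[OF t0 ZmF] .
      have a: "0 \<le> tg N k" "tg N (Suc k) \<le> T" using t0 t1 by auto
      have Gd: "distributed P lborel G (\<lambda>x. ennreal (normal_density 0 (sqrt h) x))"
        using conjunct1[OF Winc[OF a(1) lt a(2)]] unfolding G_def hk .
      have sq: "sqrt h > 0" using hpos by simp
      have ind: "\<And>A B. A \<in> sets borel \<Longrightarrow> B \<in> sets borel \<Longrightarrow>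
         emeasure P {\<omega>\<in>space P. Z \<omega> \<in> A \<and> G \<omega> \<in> B}
           = emeasure P {\<omega>\<in>space P. Z \<omega> \<in> A} * emeasure P {\<omega>\<in>space P. G \<omega> \<in> B}"
        unfolding G_def by (rule indW[OF a(1) lt a(2) ZmF])
      have pos: "emeasure P {\<omega>\<in>space P. Z \<omega> \<in> S \<and> Z \<omega> + G \<omega> - Z \<omega> ^ 3 * h \<in> S} > 0"
      proof -
        have IH': "emeasure P {\<omega>\<in>space P. Z \<omega> \<in> S} > 0" unfolding Z_def using Suc.IH[OF k(2)] .
        show ?thesis by (rule gauss_step_pos[OF prob Zm Gd sq ind Sb SR Sl IH' less_imp_le[OF hpos]])
      qed
      have Y1m: "Y N (tg N (Suc k)) \<in> borel_measurable P" using toP[OF t1 Ymeas[OF N Suc.prems]] .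
      have sub: "{\<omega>\<in>space P. Z \<omega> \<in> S \<and> Z \<omega> + G \<omega> - Z \<omega> ^ 3 * h \<in> S}
          \<subseteq> {\<omega>\<in>space P. Y N (tg N (Suc k)) \<omega> \<in> S}"
      proof safe
        fix \<omega> assume w: "\<omega> \<in> space P" and ZS: "Z \<omega> \<in> S" and YS: "Z \<omega> + G \<omega> - Z \<omega> ^ 3 * h \<in> S"
        have "Z \<omega> \<in> D (T / real N)" using ZS SDh unfolding h_def by auto
        then have "Y N (tg N (Suc k)) \<omega> = Z \<omega> + G \<omega> - Z \<omega> ^ 3 * h"
          using Ystep[OF N k(1), of "tg N (Suc k)" \<omega>] w lt hk unfolding Z_def G_def by auto
        then show "Y N (tg N (Suc k)) \<omega> \<in> S" using YS by simp
      qed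
      have "emeasure P {\<omega>\<in>space P. Z \<omega> \<in> S \<and> Z \<omega> + G \<omega> - Z \<omega> ^ 3 * h \<in> S}
          \<le> emeasure P {\<omega>\<in>space P. Y N (tg N (Suc k)) \<omega> \<in> S}"
      proof (rule emeasure_mono[OF sub])
        have "{\<omega>\<in>space P. Y N (tg N (Suc k)) \<omega> \<in> S} = Y N (tg N (Suc k)) -` S \<inter> space P" by auto
        then show "{\<omega>\<in>space P. Y N (tg N (Suc k)) \<omega> \<in> S} \<in> sets P" using measurable_sets[OF Y1m Sb] by simp
      qed
      then show ?case using pos by simp
    qed
    obtain n where n: "n < N" "tg N n < t" "t \<le> tg N (n+1)"
    proof -
      have tT: "t \<in> {0..T}" using t by auto
      obtain m where m: "m < N" "t \<in> {tg N m .. tg N (m+1)}" using grid_cover[OF T_pos N tT] unfolding tg_def by blast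
      show ?thesis
      proof (cases "tg N m < t")
        case True then show ?thesis using that m by auto
      next
        case False
        then have tm: "t = tg N m" using m by auto
        have "m \<noteq> 0"
        proof
          assume "m = 0"
          then have "t = 0" using tm by (simp add: tg_def)
          then show False using t by simp
        qed
        then obtain m' where m': "m = Suc m'" by (cases m) auto
        have "tg N m' < tg N m" using tglt[OF N, of m'] m' by simp
        then show ?thesis using that[of m'] m m' tm by auto
      qed
    qed
    have t0: "tg N n \<in> {0..T}" using tgin[OF N] n by auto
    have tT: "t \<in> {0..T}" using t by auto
    define Z where "Z = Y N (tg N n)"
    define G where "G = (\<lambda>\<omega>. W t \<omega> - W (tg N n) \<omega>)"
    have ZmF: "Z \<in> borel_measurable (F (tg N n))" unfolding Z_def using Ymeas[OF N] n by auto
    have Zm: "Z \<in> borel_measurable P" using toP[OF t0 ZmF] .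
    have a: "0 \<le> tg N n" "t \<le> T" using t0 tT by auto
    have Gd: "distributed P lborel G (\<lambda>x. ennreal (normal_density 0 (sqrt (t - tg N n)) x))"
      using conjunct1[OF Winc[OF a(1) n(2) a(2)]] unfolding G_def .
    have sq: "sqrt (t - tg N n) > 0" using n by simp
    have ind: "\<And>A B. A \<in> sets borel \<Longrightarrow> B \<in> sets borel \<Longrightarrow>
       emeasure P {\<omega>\<in>space P. Z \<omega> \<in> A \<and> G \<omega> \<in> B}
         = emeasure P {\<omega>\<in>space P. Z \<omega> \<in> A} * emeasure P {\<omega>\<in>space P. G \<omega> \<in> B}"
      unfolding G_def by (rule indW[OF a(1) n(2) a(2) ZmF])
    have SZ: "emeasure P {\<omega>\<in>space P. Z \<omega> \<in> S} > 0" unfolding Z_def using stepk n by auto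
    have Yeq: "Y N t \<omega> = Z \<omega> + G \<omega> - Z \<omega> ^ 3 * (t - tg N n)" if w: "\<omega> \<in> space P" and ZS: "Z \<omega> \<in> S" for \<omega>
    proof -
      have "Z \<omega> \<in> D (T / real N)" using ZS SDh unfolding h_def by auto
      then show ?thesis using Ystep[OF N n(1), of t \<omega>] w n unfolding Z_def G_def by auto
    qed
    show ?thesis
      by (rule gauss_exp_infty[OF prob Zm Gd sq ind Sb SR SZ _ Yeq p q]) (use n in auto)
  qed
  show ?thesis using part1 part2 by blast
qed


end
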